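(* Let $G$ be a finite group and $N\trianglelefteq G$. Then \[ \gamma^{\mathrm{s}}_{\mathrm{cp}}(G)\le\gamma^{\mathrm{ss}}_{\mathrm{cp}}(N)+\gamma^{\mathrm{s}}_{\mathrm{cp}}(G/N). \]
   Context: For $A\le G$, $\gamma^A_{\mathrm{cp}}(G)$ is the smallest $k$ such that $G=A_1\cdots A_k$ (setwise) with each $A_i$ conjugate to $A$ in $G$ ($\infty$ if none). $\gamma^{\mathrm{s}}_{\mathrm{cp}}(G):=\min\{\gamma^A_{\mathrm{cp}}(G): A\le G\text{ solvable}\}$. A factorization $G=A_1\cdots A_k$ by conjugates of $A$ is a special solvable cp-factorization if (i) $A$ is solvable, (ii) $N_G(A)=A$, and (iii) for every $\alpha\in\mathrm{Aut}(G)$ there is $g\in G$ with $A^\alpha=A^g$; $\gamma^{\mathrm{ss}}_{\mathrm{cp}}(G)$ is the minimal length of such a factorization. *)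

theory Defs
  imports "HOL-Algebra.Algebra" "HOL-Library.Extended_Nat"
begin

definition conjset :: "('a, 'b) monoid_scheme \<Rightarrow> 'a set \<Rightarrow> 'a \<Rightarrow> 'a set" where
  "conjset G A g = (g <#\<^bsub>G\<^esub> A) #>\<^bsub>G\<^esub> inv\<^bsub>G\<^esub> g"

fun setprod_list :: "('a, 'b) monoid_scheme \<Rightarrow> 'a set list \<Rightarrow> 'a set" where
  "setprod_list G [] = {\<one>\<^bsub>G\<^esub>}"
| "setprod_list G [A] = A"
| "setprod_list G (A # As) = A <#>\<^bsub>G\<^esub> setprod_list G As"

definition cp_fact :: "('a, 'b) monoid_scheme \<Rightarrow> 'a set \<Rightarrow> nat \<Rightarrow> bool" where
  "cp_fact G A k \<longleftrightarrow> k \<ge> 1 \<and> (\<exists>gs. length gs = k \<and> set gs \<subseteq> carrier G \<and>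
      setprod_list G (map (conjset G A) gs) = carrier G)"

text \<open>gamma^A_cp(G); infinity if no such factorization.\<close>
definition gamma_cp :: "('a, 'b) monoid_scheme \<Rightarrow> 'a set \<Rightarrow> enat" where
  "gamma_cp G A = Inf {enat k | k. cp_fact G A k}"

definition gamma_s :: "('a, 'b) monoid_scheme \<Rightarrow> enat" where
  "gamma_s G = Inf {gamma_cp G A | A. subgroup A G \<and> solvable (G\<lparr>carrier := A\<rparr>)}"

definition special_sub :: "('a, 'b) monoid_scheme \<Rightarrow> 'a set \<Rightarrow> bool" where
  "special_sub G A \<longleftrightarrow> subgroup A G \<and> solvable (G\<lparr>carrier := A\<rparr>) \<and>
     normalizer G A = A \<and>
     (\<forall>\<alpha> \<in> iso G G. \<exists>g \<in> carrier G. \<alpha> ` A = conjset G A g)"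

definition gamma_ss :: "('a, 'b) monoid_scheme \<Rightarrow> enat" where
  "gamma_ss G = Inf {gamma_cp G A | A. special_sub G A}"

end

theory Submission
  imports Defs
begin


lemma conjset_eq:
  assumes "group G" "A \<subseteq> carrier G" "g \<in> carrier G"
  shows "conjset G A g = (\<lambda>a. g \<otimes>\<^bsub>G\<^esub> a \<otimes>\<^bsub>G\<^esub> inv\<^bsub>G\<^esub> g) ` A"
  unfolding conjset_def l_coset_def r_coset_def by auto

lemma conjset_sub:
  assumes "group G" "subgroup N G" "n \<in> N"
  shows "conjset (G\<lparr>carrier := N\<rparr>) A n = conjset G A n"
  using assms unfolding conjset_def l_coset_def r_coset_def
  by (simp add: group.m_inv_consistent)

lemma conjset_carrier:
  assumes "group G" "A \<subseteq> carrier G" "g \<in> carrier G"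
  shows "conjset G A g \<subseteq> carrier G"
proof -
  interpret group G by fact
  show ?thesis using assms by (auto simp: conjset_eq)
qed

lemma conjset_comp:
  fixes G (structure)
  assumes "group G" "A \<subseteq> carrier G" "g \<in> carrier G" "h \<in> carrier G"
  shows "conjset G (conjset G A h) g = conjset G A (g \<otimes>\<^bsub>G\<^esub> h)"
proof -
  interpret group G by fact
  have c: "conjset G A h \<subseteq> carrier G" by (rule conjset_carrier[OF assms(1,2,4)])
  have gh: "g \<otimes> h \<in> carrier G" using assms(3,4) by (rule m_closed)
  have e: "\<And>a. a \<in> A \<Longrightarrow> g \<otimes> (h \<otimes> a \<otimes> inv h) \<otimes> inv g = g \<otimes> h \<otimes> a \<otimes> inv (g \<otimes> h)"
  proof -
    fix a assume "a \<in> A" then have ac: "a \<in> carrier G" using assms by auto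
    show "g \<otimes> (h \<otimes> a \<otimes> inv h) \<otimes> inv g = g \<otimes> h \<otimes> a \<otimes> inv (g \<otimes> h)"
      using ac assms(3,4) by (simp only: inv_mult_group m_assoc inv_closed m_closed)
  qed
  have 1: "conjset G (conjset G A h) g = (\<lambda>b. g \<otimes> b \<otimes> inv g) ` ((\<lambda>a. h \<otimes> a \<otimes> inv h) ` A)"
    using conjset_eq[OF assms(1) c assms(3)] conjset_eq[OF assms(1,2,4)] by simp
  also have "\<dots> = (\<lambda>a. g \<otimes> h \<otimes> a \<otimes> inv (g \<otimes> h)) ` A"
    unfolding image_image using e by auto
  also have "\<dots> = conjset G A (g \<otimes> h)" using conjset_eq[OF assms(1,2) gh] by simp
  finally show ?thesis .
qed

lemma conjset_one:
  fixes G (structure)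
  assumes "group G" "A \<subseteq> carrier G"
  shows "conjset G A \<one>\<^bsub>G\<^esub> = A"
proof -
  interpret group G by fact
  have "\<And>a. a \<in> A \<Longrightarrow> \<one> \<otimes> a \<otimes> inv \<one> = a" using assms(2) by auto
  then show ?thesis using assms by (simp add: conjset_eq)
qed
    
lemma conjset_self:
  fixes G (structure)
  assumes "group G" "subgroup A G" "a \<in> A"
  shows "conjset G A a = A"
proof -
  interpret group G by fact
  have ac: "a \<in> carrier G" using subgroup.mem_carrier[OF assms(2,3)] .
  have ia: "inv a \<in> A" using subgroup.m_inv_closed[OF assms(2,3)] .
  have 1: "a <# A = A" using coset_join3[OF ac assms(2,3)] .
  have 2: "A #> inv a = A" using coset_join2[OF inv_closed[OF ac] assms(2) ia] .
  show ?thesis unfolding conjset_def 1 2 ..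
qed

lemma setprod_list_carrier:
  assumes "group G" "\<forall>Y\<in>set Ys. Y \<subseteq> carrier G"
  shows "setprod_list G Ys \<subseteq> carrier G"
  using assms(2)
proof (induction Ys)
  case Nil then show ?case using assms(1) by (simp add: group.is_monoid monoid.one_closed)
next
  case (Cons Y Ys)
  then show ?case
    using assms(1) by (cases Ys) (auto simp: set_mult_def group.is_monoid monoid.m_closed subset_iff)
qed

lemma setprod_list_sub:
  "setprod_list (G\<lparr>carrier := N\<rparr>) Ys = setprod_list G Ys"
  by (induction Ys rule: induct_list012) (auto simp: set_mult_def)

lemma set_mult_mono:
  "A \<subseteq> A' \<Longrightarrow> B \<subseteq> B' \<Longrightarrow> A <#>\<^bsub>G\<^esub> B \<subseteq> A' <#>\<^bsub>G\<^esub> B'"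
  unfolding set_mult_def by blast

lemma setprod_list_mono:
  assumes "\<forall>x\<in>set xs. f x \<subseteq> h x"
  shows "setprod_list G (map f xs) \<subseteq> setprod_list G (map h xs)"
  using assms
proof (induction xs)
  case Nil then show ?case by simp
next
  case (Cons x xs)
  show ?case
  proof (cases xs)
    case Nil then show ?thesis using Cons.prems by simp
  next
    case (Cons a list)
    have "setprod_list G (map f xs) \<subseteq> setprod_list G (map h xs)" using Cons.IH Cons.prems by simp
    moreover have "f x \<subseteq> h x" using Cons.prems by simp
    ultimately show ?thesis using Cons by (simp only: list.map setprod_list.simps set_mult_mono)
  qed
qed

lemma setprod_append_mem:
  assumes "group G" "\<forall>Y\<in>set xs. Y \<subseteq> carrier G" "\<forall>Y\<in>set ys. Y \<subseteq> carrier G"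
    "xs \<noteq> []" "ys \<noteq> []" "y \<in> setprod_list G xs" "z \<in> setprod_list G ys"
  shows "y \<otimes>\<^bsub>G\<^esub> z \<in> setprod_list G (xs @ ys)"
  using assms(2,4,6)
proof (induction xs arbitrary: y)
  case Nil then show ?case by simp
next
  case (Cons Y xs)
  note P = Cons.prems
  note IH0 = Cons.IH
  obtain y1 ys1 where ys: "ys = y1 # ys1" using assms(5) by (cases ys) auto
  show ?case
  proof (cases xs)
    case Nil
    then have "y \<in> Y" using P by simp
    moreover have "setprod_list G ((Y # xs) @ ys) = Y <#>\<^bsub>G\<^esub> setprod_list G ys"
      using Nil ys by simp
    ultimately show ?thesis using assms(7) unfolding set_mult_def by blast
  next
    case (Cons Y' xs')
    have eq1: "setprod_list G (Y # xs) = Y <#>\<^bsub>G\<^esub> setprod_list G xs" using Cons by simp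
    have eq2: "setprod_list G ((Y # xs) @ ys) = Y <#>\<^bsub>G\<^esub> setprod_list G (xs @ ys)" using Cons by simp
    obtain a w where a: "a \<in> Y" "w \<in> setprod_list G xs" "y = a \<otimes>\<^bsub>G\<^esub> w"
      using P(3) unfolding eq1 set_mult_def by blast
    have IH: "w \<otimes>\<^bsub>G\<^esub> z \<in> setprod_list G (xs @ ys)"
      using IH0[of w] P(1) a(2) Cons by simp
    have "a \<in> carrier G" using a(1) P(1) by auto
    moreover have "w \<in> carrier G" using setprod_list_carrier[OF assms(1), of xs] a(2) P(1) by auto
    moreover have "z \<in> carrier G" using setprod_list_carrier[OF assms(1) assms(3)] assms(7) by auto
    ultimately have "y \<otimes>\<^bsub>G\<^esub> z = a \<otimes>\<^bsub>G\<^esub> (w \<otimes>\<^bsub>G\<^esub> z)"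
      using a(3) assms(1) by (simp add: group.is_monoid monoid.m_assoc)
    then show ?thesis using IH a(1) unfolding eq2 set_mult_def by blast
  qed
qed

lemma reps_list:
  fixes G (structure)
  assumes "set hs \<subseteq> rcosets N"
  shows "\<exists>gs. hs = map (\<lambda>g. N #> g) gs \<and> set gs \<subseteq> carrier G"
  using assms
proof (induction hs)
  case Nil then show ?case by simp
next
  case (Cons h hs)
  then obtain gs where "hs = map (\<lambda>g. N #> g) gs \<and> set gs \<subseteq> carrier G" by auto
  moreover obtain g where "g \<in> carrier G" "h = N #> g" using Cons.prems by (auto simp: RCOSETS_def)
  ultimately show ?case by (intro exI[of _ "g # gs"]) auto
qed

lemma enat_Inf_mem:
  assumes "Inf Z \<noteq> (\<infinity>::enat)"
  shows "Inf Z \<in> Z"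
proof -
  have "Z \<noteq> {}" using assms by (auto simp: Inf_enat_def)
  then show ?thesis unfolding Inf_enat_def by (auto intro: LeastI)
qed



lemma quot_conj:
  fixes G (structure)
  assumes "group G" "N \<lhd> G" "S \<subseteq> carrier G" "\<forall>b\<in>B. \<exists>s\<in>S. b = N #> s" "g \<in> carrier G"
    "C \<in> conjset (G Mod N) B (N #> g)"
  shows "\<exists>y\<in>conjset G S g. C = N #> y"
proof -
  interpret group G by fact
  interpret normal N G by fact
  have hQ: "N #> g \<in> carrier (G Mod N)" using assms(5) subset by (simp add: FactGroup_def rcosetsI)
  have inv: "inv\<^bsub>G Mod N\<^esub> (N #> g) = N #> inv g"
    using inv_FactGroup[OF hQ] rcos_inv[OF assms(5)] by simp
  obtain b where b: "b \<in> B" "C = ((N #> g) <#> b) <#> (N #> inv g)"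
    using assms(6) unfolding conjset_def inv l_coset_def[of "G Mod N"] r_coset_def[of "G Mod N"] mult_FactGroup
    by auto
  obtain s where s: "s \<in> S" "b = N #> s" using assms(4) b(1) by blast
  have sc: "s \<in> carrier G" using s assms(3) by auto
  have "C = N #> (g \<otimes> s \<otimes> inv g)"
    using b(2) s(2) sc assms(5) by (simp add: rcos_sum)
  moreover have "g \<otimes> s \<otimes> inv g \<in> conjset G S g"
    using conjset_eq[OF assms(1,3,5)] s(1) by auto
  ultimately show ?thesis by blast
qed

lemma quot_prod:
  fixes G (structure)
  assumes "group G" "N \<lhd> G" "S \<subseteq> carrier G" "\<forall>b\<in>B. \<exists>s\<in>S. b = N #> s"
  shows "set gs \<subseteq> carrier G \<Longrightarrow> gs \<noteq> [] \<Longrightarrow>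
    C \<in> setprod_list (G Mod N) (map (conjset (G Mod N) B) (map (\<lambda>g. N #> g) gs)) \<Longrightarrow>
    \<exists>y\<in>setprod_list G (map (conjset G S) gs). C = N #> y"
proof (induction gs arbitrary: C)
  case Nil then show ?case by simp
next
  case (Cons g gs)
  interpret group G by fact
  interpret normal N G by fact
  show ?case
  proof (cases gs)
    case Nil
    then show ?thesis using Cons.prems quot_conj[OF assms, of g C] by simp
  next
    case (Cons g' gs')
    have eq1: "setprod_list (G Mod N) (map (conjset (G Mod N) B) (map (\<lambda>g. N #> g) (g # gs)))
      = conjset (G Mod N) B (N #> g) <#>\<^bsub>G Mod N\<^esub> setprod_list (G Mod N) (map (conjset (G Mod N) B) (map (\<lambda>g. N #> g) gs))"
      using Cons by simp
    have eq2: "setprod_list G (map (conjset G S) (g # gs)) = conjset G S g <#> setprod_list G (map (conjset G S) gs)"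
      using Cons by simp
    obtain C1 C2 where C: "C1 \<in> conjset (G Mod N) B (N #> g)"
      "C2 \<in> setprod_list (G Mod N) (map (conjset (G Mod N) B) (map (\<lambda>g. N #> g) gs))" "C = C1 <#> C2"
      using Cons.prems(3) unfolding eq1 set_mult_def[of "G Mod N"] mult_FactGroup by blast
    obtain y1 where y1: "y1 \<in> conjset G S g" "C1 = N #> y1"
      using quot_conj[OF assms, of g C1] C(1) Cons.prems(1) by auto
    obtain y2 where y2: "y2 \<in> setprod_list G (map (conjset G S) gs)" "C2 = N #> y2"
      using Cons.IH[OF _ _ C(2)] Cons.prems(1) Cons by auto
    have y1c: "y1 \<in> carrier G" using y1(1) conjset_carrier[OF assms(1,3)] Cons.prems(1) by auto
    have "\<forall>Y\<in>set (map (conjset G S) gs). Y \<subseteq> carrier G"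
      using conjset_carrier[OF assms(1,3)] Cons.prems(1) by auto
    then have "setprod_list G (map (conjset G S) gs) \<subseteq> carrier G"
      using setprod_list_carrier[OF assms(1)] by blast
    then have y2c: "y2 \<in> carrier G" using y2(1) by auto
    have "C = N #> (y1 \<otimes> y2)" using C(3) y1(2) y2(2) y1c y2c by (simp add: rcos_sum)
    moreover have "y1 \<otimes> y2 \<in> setprod_list G (map (conjset G S) (g # gs))"
      unfolding eq2 set_mult_def using y1(1) y2(1) by blast
    ultimately show ?thesis by blast
  qed
qed

lemma conj_iso:
  fixes G (structure)
  assumes "group G" "N \<lhd> G" "x \<in> carrier G"
  shows "(\<lambda>y. x \<otimes> y \<otimes> inv x) \<in> iso (G\<lparr>carrier := N\<rparr>) (G\<lparr>carrier := N\<rparr>)"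
proof -
  interpret group G by fact
  interpret normal N G by fact
  have Nc: "N \<subseteq> carrier G" by (rule subset)
  have hom: "(\<lambda>y. x \<otimes> y \<otimes> inv x) \<in> hom (G\<lparr>carrier := N\<rparr>) (G\<lparr>carrier := N\<rparr>)"
  proof (rule homI)
    fix a assume "a \<in> carrier (G\<lparr>carrier := N\<rparr>)"
    then show "x \<otimes> a \<otimes> inv x \<in> carrier (G\<lparr>carrier := N\<rparr>)" using assms(3) inv_op_closed2 by simp
  next
    fix a b assume "a \<in> carrier (G\<lparr>carrier := N\<rparr>)" "b \<in> carrier (G\<lparr>carrier := N\<rparr>)"
    then have ab: "a \<in> carrier G" "b \<in> carrier G" using Nc by auto
    then show "x \<otimes> (a \<otimes>\<^bsub>G\<lparr>carrier := N\<rparr>\<^esub> b) \<otimes> inv x =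
      (x \<otimes> a \<otimes> inv x) \<otimes>\<^bsub>G\<lparr>carrier := N\<rparr>\<^esub> (x \<otimes> b \<otimes> inv x)"
      using assms(3) by (simp add: m_assoc inv_solve_left)
  qed
  have "bij_betw (\<lambda>y. x \<otimes> y \<otimes> inv x) N N"
  proof (rule bij_betwI')
    fix a b assume "a \<in> N" "b \<in> N"
    then show "(x \<otimes> a \<otimes> inv x = x \<otimes> b \<otimes> inv x) = (a = b)"
      using Nc assms(3) by auto
  next
    fix a assume "a \<in> N" then show "x \<otimes> a \<otimes> inv x \<in> N" using assms(3) inv_op_closed2 by simp
  next
    fix a assume a: "a \<in> N"
    have n1: "inv x \<otimes> a \<otimes> x \<in> N" using a assms(3) inv_op_closed1 by simp
    have ac: "a \<in> carrier G" using a Nc by auto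
    have "x \<otimes> (inv x \<otimes> a \<otimes> x) \<otimes> inv x = a"
      using ac assms(3) by (simp add: m_assoc) (simp add: m_assoc[symmetric])
    then show "\<exists>b\<in>N. a = x \<otimes> b \<otimes> inv x" using n1 by metis
  qed
  then show ?thesis using hom by (simp add: iso_def)
qed



lemma key:
  fixes G (structure)
  assumes grp: "group G" and nN: "N \<lhd> G"
    and sp: "special_sub (G\<lparr>carrier := N\<rparr>) A" and cpA: "cp_fact (G\<lparr>carrier := N\<rparr>) A k"
    and sB: "subgroup B (G Mod N)" and solB: "solvable ((G Mod N)\<lparr>carrier := B\<rparr>)"
    and cpB: "cp_fact (G Mod N) B m"
  shows "\<exists>S. subgroup S G \<and> solvable (G\<lparr>carrier := S\<rparr>) \<and> cp_fact G S (k + m)"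
proof -
  interpret group G by (rule grp)
  interpret normal N G by (rule nN)
  have NG: "subgroup N G" by (rule subgroup_axioms)
  have Nc: "N \<subseteq> carrier G" by (rule subset)
  have AN: "subgroup A (G\<lparr>carrier := N\<rparr>)" using sp by (simp add: special_sub_def)
  have AsubN: "A \<subseteq> N" using subgroup.subset[OF AN] by simp
  have AG: "subgroup A G" using incl_subgroup[OF NG AN] .
  have Ac: "A \<subseteq> carrier G" using AsubN Nc by auto
  have solA: "solvable (G\<lparr>carrier := A\<rparr>)" using sp by (simp add: special_sub_def)
  have normA: "normalizer (G\<lparr>carrier := N\<rparr>) A = A" using sp by (simp add: special_sub_def)
  have autA: "\<forall>\<alpha>\<in>iso (G\<lparr>carrier := N\<rparr>) (G\<lparr>carrier := N\<rparr>). \<exists>g\<in>N. \<alpha> ` A = conjset G A g"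
    using sp conjset_sub[OF grp NG] by (simp add: special_sub_def)
  define Nz where "Nz = {g \<in> carrier G. conjset G A g = A}"
  have Nz_N: "Nz \<inter> N \<subseteq> A"
  proof
    fix x assume x: "x \<in> Nz \<inter> N"
    then have xc: "x \<in> carrier G" and cA: "conjset G A x = A" by (auto simp: Nz_def)
    have "x \<in> normalizer (G\<lparr>carrier := N\<rparr>) A"
      using x cA AsubN NG unfolding normalizer_def stabilizer_def conjset_def l_coset_def r_coset_def
      by (auto simp: m_inv_consistent)
    then show "x \<in> A" using normA by simp
  qed
  have fr: "\<forall>x\<in>carrier G. \<exists>n\<in>N. \<exists>y\<in>Nz. x = n \<otimes> y"
  proof
    fix x assume xc: "x \<in> carrier G"
    obtain n where n: "n \<in> N" "(\<lambda>y. x \<otimes> y \<otimes> inv x) ` A = conjset G A n"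
      using autA conj_iso[OF grp nN xc] by blast
    have nc: "n \<in> carrier G" using n Nc by auto
    have cx: "conjset G A x = conjset G A n" using n(2) conjset_eq[OF grp Ac xc] by simp
    have "conjset G A (inv n \<otimes> x) = conjset G (conjset G A x) (inv n)"
      using conjset_comp[OF grp Ac] nc xc by simp
    also have "\<dots> = conjset G (conjset G A n) (inv n)" using cx by simp
    also have "\<dots> = conjset G A (inv n \<otimes> n)" using conjset_comp[OF grp Ac] nc by simp
    also have "\<dots> = A" using conjset_one[OF grp Ac] nc by simp
    finally have "inv n \<otimes> x \<in> Nz" using nc xc by (simp add: Nz_def)
    moreover have "x = n \<otimes> (inv n \<otimes> x)" using nc xc by (simp add: m_assoc[symmetric])
    ultimately show "\<exists>n\<in>N. \<exists>y\<in>Nz. x = n \<otimes> y" using n(1) by blast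
  qed
  have AsubNz: "A \<subseteq> Nz" using conjset_self[OF grp AG] Ac by (auto simp: Nz_def)
  define H where "H = {x \<in> carrier G. N #> x \<in> B}"
  define S where "S = Nz \<inter> H"
  have Bc: "B \<subseteq> rcosets N" using subgroup.subset[OF sB] by (simp add: FactGroup_def)
  have NB: "N \<in> B" using subgroup.one_closed[OF sB] by simp
  have Sc: "S \<subseteq> carrier G" by (auto simp: S_def Nz_def)
  have Bmult: "\<And>U V. U \<in> B \<Longrightarrow> V \<in> B \<Longrightarrow> U <#> V \<in> B"
    using subgroup.m_closed[OF sB] by simp
  have Binv: "\<And>x. x \<in> carrier G \<Longrightarrow> N #> x \<in> B \<Longrightarrow> N #> inv x \<in> B"
  proof -
    fix x assume xc: "x \<in> carrier G" and xB: "N #> x \<in> B"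
    have "inv\<^bsub>G Mod N\<^esub> (N #> x) \<in> B" using subgroup.m_inv_closed[OF sB xB] .
    moreover have "N #> x \<in> carrier (G Mod N)" using xB Bc by (simp add: FactGroup_def subset_iff)
    ultimately show "N #> inv x \<in> B" using inv_FactGroup rcos_inv[OF xc] by simp
  qed
  have Nzinv: "\<And>x. x \<in> Nz \<Longrightarrow> inv x \<in> Nz"
  proof -
    fix x assume x: "x \<in> Nz"
    then have xc: "x \<in> carrier G" and cA: "conjset G A x = A" by (auto simp: Nz_def)
    have "conjset G A (inv x) = conjset G (conjset G A x) (inv x)" using cA by simp
    also have "\<dots> = conjset G A (inv x \<otimes> x)" using conjset_comp[OF grp Ac] xc by simp
    also have "\<dots> = A" using conjset_one[OF grp Ac] xc by simp
    finally show "inv x \<in> Nz" using xc by (simp add: Nz_def)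
  qed
  have Nzmult: "\<And>x y. x \<in> Nz \<Longrightarrow> y \<in> Nz \<Longrightarrow> x \<otimes> y \<in> Nz"
  proof -
    fix x y assume x: "x \<in> Nz" and y: "y \<in> Nz"
    then have xc: "x \<in> carrier G" "y \<in> carrier G" and cA: "conjset G A x = A" "conjset G A y = A"
      by (auto simp: Nz_def)
    have "conjset G A (x \<otimes> y) = conjset G (conjset G A y) x" using conjset_comp[OF grp Ac] xc by simp
    also have "\<dots> = A" using cA by simp
    finally show "x \<otimes> y \<in> Nz" using xc by (simp add: Nz_def)
  qed
  have SG: "subgroup S G"
  proof (rule subgroupI)
    show "S \<subseteq> carrier G" by (rule Sc)
    have "\<one> \<in> Nz" using conjset_one[OF grp Ac] by (simp add: Nz_def)
    moreover have "N #> \<one> = N" using coset_mult_one[OF Nc] .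
    ultimately have "\<one> \<in> S" using NB by (simp add: S_def H_def)
    then show "S \<noteq> {}" by blast
  next
    fix a assume "a \<in> S"
    then show "inv a \<in> S" using Nzinv Binv by (auto simp: S_def H_def)
  next
    fix a b assume "a \<in> S" "b \<in> S"
    then show "a \<otimes> b \<in> S" using Nzmult Bmult by (auto simp: S_def H_def rcos_sum[symmetric])
  qed
  have AS: "A \<subseteq> S"
  proof
    fix a assume a: "a \<in> A"
    then have ac: "a \<in> carrier G" and aN: "a \<in> N" using Ac AsubN by auto
    have "N #> a = N" using coset_join2[OF ac NG aN] .
    then show "a \<in> S" using a AsubNz NB ac by (auto simp: S_def H_def)
  qed
  have SN: "S \<inter> N \<subseteq> A" using Nz_N by (auto simp: S_def)
  have surj: "\<forall>b\<in>B. \<exists>s\<in>S. b = N #> s"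
  proof
    fix b assume b: "b \<in> B"
    then obtain x where xc: "x \<in> carrier G" and bx: "b = N #> x" using Bc by (auto simp: RCOSETS_def)
    obtain n y where n: "n \<in> N" "y \<in> Nz" "x = n \<otimes> y" using fr xc by blast
    have nc: "n \<in> carrier G" "y \<in> carrier G" using n Nc by (auto simp: Nz_def)
    have "N #> x = (N #> n) #> y" using coset_mult_assoc[OF Nc nc] n(3) by simp
    also have "\<dots> = N #> y" using coset_join2[OF nc(1) NG n(1)] by simp
    finally have "b = N #> y" using bx by simp
    moreover then have "y \<in> S" using b n(2) nc by (simp add: S_def H_def)
    ultimately show "\<exists>s\<in>S. b = N #> s" by blast
  qed
  have hom1: "group_hom (G\<lparr>carrier := A\<rparr>) (G\<lparr>carrier := S\<rparr>) (\<lambda>x. x)"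
    unfolding group_hom_def group_hom_axioms_def
    using subgroup_imp_group[OF AG] subgroup_imp_group[OF SG] AS by (auto simp: hom_def)
  have grpQ: "group (G Mod N)" by (rule factorgroup_is_group)
  have hom2: "group_hom (G\<lparr>carrier := S\<rparr>) ((G Mod N)\<lparr>carrier := B\<rparr>) (\<lambda>x. N #> x)"
    unfolding group_hom_def group_hom_axioms_def
  proof (intro conjI)
    show "group (G\<lparr>carrier := S\<rparr>)" using subgroup_imp_group[OF SG] .
    show "group ((G Mod N)\<lparr>carrier := B\<rparr>)" using group.subgroup_imp_group[OF grpQ sB] .
    show "(\<lambda>x. N #> x) \<in> hom (G\<lparr>carrier := S\<rparr>) ((G Mod N)\<lparr>carrier := B\<rparr>)"
    proof (rule homI)
      fix x assume "x \<in> carrier (G\<lparr>carrier := S\<rparr>)"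
      then show "N #> x \<in> carrier ((G Mod N)\<lparr>carrier := B\<rparr>)" by (simp add: S_def H_def)
    next
      fix x y assume "x \<in> carrier (G\<lparr>carrier := S\<rparr>)" "y \<in> carrier (G\<lparr>carrier := S\<rparr>)"
      then have "x \<in> carrier G" "y \<in> carrier G" using Sc by auto
      then show "N #> x \<otimes>\<^bsub>G\<lparr>carrier := S\<rparr>\<^esub> y = (N #> x) \<otimes>\<^bsub>(G Mod N)\<lparr>carrier := B\<rparr>\<^esub> (N #> y)"
        by (simp add: rcos_sum)
    qed
  qed
  have img: "(\<lambda>x. N #> x) ` carrier (G\<lparr>carrier := S\<rparr>) = carrier ((G Mod N)\<lparr>carrier := B\<rparr>)"
    using surj by (auto simp: S_def H_def)
  have ker: "kernel (G\<lparr>carrier := S\<rparr>) ((G Mod N)\<lparr>carrier := B\<rparr>) (\<lambda>x. N #> x) \<subseteq> (\<lambda>x. x) ` carrier (G\<lparr>carrier := A\<rparr>)"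
  proof
    fix x assume "x \<in> kernel (G\<lparr>carrier := S\<rparr>) ((G Mod N)\<lparr>carrier := B\<rparr>) (\<lambda>x. N #> x)"
    then have xS: "x \<in> S" and xN: "N #> x = N" by (auto simp: kernel_def)
    have "x \<in> N" using rcos_self[of x N] xS Sc NG xN by auto
    then show "x \<in> (\<lambda>x. x) ` carrier (G\<lparr>carrier := A\<rparr>)" using xS SN by auto
  qed
  have solS: "solvable (G\<lparr>carrier := S\<rparr>)"
    by (rule solvable_condition[OF hom1 hom2 img ker solA solB])
  obtain ns where ns: "k \<ge> 1" "length ns = k" "set ns \<subseteq> N"
    "setprod_list (G\<lparr>carrier := N\<rparr>) (map (conjset (G\<lparr>carrier := N\<rparr>) A) ns) = N"
    using cpA by (auto simp: cp_fact_def)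
  have "map (conjset (G\<lparr>carrier := N\<rparr>) A) ns = map (conjset G A) ns"
    using ns(3) conjset_sub[OF grp NG] by auto
  then have prodN: "setprod_list G (map (conjset G A) ns) = N"
    using ns(4) setprod_list_sub by metis
  obtain hs where hs: "m \<ge> 1" "length hs = m" "set hs \<subseteq> carrier (G Mod N)"
    "setprod_list (G Mod N) (map (conjset (G Mod N) B) hs) = carrier (G Mod N)"
    using cpB by (auto simp: cp_fact_def)
  obtain gs where gs: "hs = map (\<lambda>g. N #> g) gs" "set gs \<subseteq> carrier G"
    using reps_list[of hs G N] hs(3) by (auto simp: FactGroup_def)
  have gsne: "gs \<noteq> []" and nsne: "ns \<noteq> []" using gs(1) hs(1,2) ns(1,2) by auto
  have nsc: "set ns \<subseteq> carrier G" using ns(3) Nc by auto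
  have cS1: "\<forall>Y\<in>set (map (conjset G S) gs). Y \<subseteq> carrier G" using gs(2) conjset_carrier[OF grp Sc] by auto
  have cS2: "\<forall>Y\<in>set (map (conjset G S) ns). Y \<subseteq> carrier G" using nsc conjset_carrier[OF grp Sc] by auto
  have prodG: "setprod_list G (map (conjset G S) (gs @ ns)) = carrier G"
  proof
    show "setprod_list G (map (conjset G S) (gs @ ns)) \<subseteq> carrier G"
      by (rule setprod_list_carrier[OF grp]) (use cS1 cS2 in auto)
  next
    show "carrier G \<subseteq> setprod_list G (map (conjset G S) (gs @ ns))"
    proof
      fix x assume xc: "x \<in> carrier G"
      have "N #> x \<in> carrier (G Mod N)" using xc by (simp add: FactGroup_def rcosetsI[OF Nc])
      then have "N #> x \<in> setprod_list (G Mod N) (map (conjset (G Mod N) B) (map (\<lambda>g. N #> g) gs))"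
        using hs(4) gs(1) by simp
      then obtain y where y: "y \<in> setprod_list G (map (conjset G S) gs)" "N #> x = N #> y"
        using quot_prod[OF grp nN Sc surj gs(2) gsne] by blast
      have yc: "y \<in> carrier G" using y(1) setprod_list_carrier[OF grp cS1] by auto
      have "x \<in> N #> y" using rcos_self[OF xc NG] y(2) by simp
      then obtain n where n: "n \<in> N" "x = n \<otimes> y" by (auto simp: r_coset_def)
      have nc: "n \<in> carrier G" using n Nc by auto
      define n' where "n' = inv y \<otimes> n \<otimes> y"
      have n'N: "n' \<in> N" using inv_op_closed1[OF yc n(1)] by (simp add: n'_def)
      have "y \<otimes> n' = n \<otimes> y" unfolding n'_def using yc nc
        by (simp add: m_assoc) (simp add: m_assoc[symmetric])
      then have xe: "x = y \<otimes> n'" using n(2) by simp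
      have "setprod_list G (map (conjset G A) ns) \<subseteq> setprod_list G (map (conjset G S) ns)"
      proof (rule setprod_list_mono, intro ballI)
        fix z assume "z \<in> set ns"
        then have zc: "z \<in> carrier G" using nsc by auto
        show "conjset G A z \<subseteq> conjset G S z"
          unfolding conjset_eq[OF grp Ac zc] conjset_eq[OF grp Sc zc] using AS by (rule image_mono)
      qed
      then have "n' \<in> setprod_list G (map (conjset G S) ns)" using n'N prodN by auto
      then show "x \<in> setprod_list G (map (conjset G S) (gs @ ns))"
        using setprod_append_mem[OF grp cS1 cS2 _ _ y(1)] gsne nsne xe by simp
    qed
  qed
  have "cp_fact G S (k + m)" unfolding cp_fact_def
    using ns(1,2) hs(2) gs prodG nsc by (intro conjI exI[of _ "gs @ ns"]) auto
  then show ?thesis using SG solS by blast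
qed

theorem lemma14:
  fixes G :: "('a, 'b) monoid_scheme" and N :: "'a set"
  assumes "group G" and "finite (carrier G)" and "N \<lhd> G"
  shows "gamma_s G \<le> gamma_ss (G\<lparr>carrier := N\<rparr>) + gamma_s (G Mod N)"
proof (cases "gamma_ss (G\<lparr>carrier := N\<rparr>) = \<infinity> \<or> gamma_s (G Mod N) = \<infinity>")
  case True then show ?thesis by (elim disjE) simp_all
next
  case False
  then have a1: "gamma_ss (G\<lparr>carrier := N\<rparr>) \<noteq> \<infinity>" and a2: "gamma_s (G Mod N) \<noteq> \<infinity>" by auto
  have "gamma_ss (G\<lparr>carrier := N\<rparr>) \<in> {gamma_cp (G\<lparr>carrier := N\<rparr>) A | A. special_sub (G\<lparr>carrier := N\<rparr>) A}"
    using enat_Inf_mem[OF a1[unfolded gamma_ss_def]] unfolding gamma_ss_def .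
  then obtain A where A: "special_sub (G\<lparr>carrier := N\<rparr>) A"
    "gamma_ss (G\<lparr>carrier := N\<rparr>) = gamma_cp (G\<lparr>carrier := N\<rparr>) A" by blast
  have c1: "gamma_cp (G\<lparr>carrier := N\<rparr>) A \<noteq> \<infinity>" using a1 A(2) by simp
  have "gamma_cp (G\<lparr>carrier := N\<rparr>) A \<in> {enat k | k. cp_fact (G\<lparr>carrier := N\<rparr>) A k}"
    using enat_Inf_mem[OF c1[unfolded gamma_cp_def]] unfolding gamma_cp_def .
  then obtain k where k: "cp_fact (G\<lparr>carrier := N\<rparr>) A k" "gamma_cp (G\<lparr>carrier := N\<rparr>) A = enat k" by blast
  have "gamma_s (G Mod N) \<in> {gamma_cp (G Mod N) B | B. subgroup B (G Mod N) \<and> solvable ((G Mod N)\<lparr>carrier := B\<rparr>)}"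
    using enat_Inf_mem[OF a2[unfolded gamma_s_def]] unfolding gamma_s_def .
  then obtain B where B: "subgroup B (G Mod N)" "solvable ((G Mod N)\<lparr>carrier := B\<rparr>)"
    "gamma_s (G Mod N) = gamma_cp (G Mod N) B" by blast
  have c2: "gamma_cp (G Mod N) B \<noteq> \<infinity>" using a2 B(3) by simp
  have "gamma_cp (G Mod N) B \<in> {enat k | k. cp_fact (G Mod N) B k}"
    using enat_Inf_mem[OF c2[unfolded gamma_cp_def]] unfolding gamma_cp_def .
  then obtain m where m: "cp_fact (G Mod N) B m" "gamma_cp (G Mod N) B = enat m" by blast
  obtain S where S: "subgroup S G" "solvable (G\<lparr>carrier := S\<rparr>)" "cp_fact G S (k + m)"
    using key[OF assms(1,3) A(1) k(1) B(1,2) m(1)] by blast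
  have "gamma_s G \<le> gamma_cp G S" unfolding gamma_s_def by (rule Complete_Lattices.Inf_lower) (use S(1,2) in blast)
  also have "\<dots> \<le> enat (k + m)" unfolding gamma_cp_def by (rule Complete_Lattices.Inf_lower) (use S(3) in blast)
  also have "\<dots> = gamma_ss (G\<lparr>carrier := N\<rparr>) + gamma_s (G Mod N)"
    using A(2) k(2) B(3) m(2) by simp
  finally show ?thesis .
qed

end
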